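(* Let $\mathcal{S}$ be a semifilter. Then the subspace $(2^\omega\times 2^\omega)\setminus\big(\mathsf{Fin}\times(2^\omega\setminus\mathcal{S})\big)$ of $2^\omega\times2^\omega$ is homeomorphic to a semifilter.
   Context: $\mathsf{Fin}=\{x\subseteq\omega: x\text{ finite}\}$. A semifilter (on $\omega$) is a collection $\mathcal{S}\subseteq\mathcal{P}(\omega)$ such that $\varnothing\notin\mathcal{S}$, $\omega\in\mathcal{S}$, $\mathcal{S}$ is closed under finite modifications (if $x\in\mathcal{S}$ and $y\subseteq\omega$ with $(x\setminus y)\cup(y\setminus x)$ finite then $y\in\mathcal{S}$), and $\mathcal{S}$ is upward-closed. Subsets of $\mathcal{P}(\omega)$ are identified via characteristic functions with subspaces of $2^\omega$. *)

theory Defs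
  imports "HOL-Analysis.Analysis"
begin

text \<open>Subsets of omega are identified with characteristic functions nat => bool.\<close>

definition Cantor :: "(nat \<Rightarrow> bool) topology" where
  "Cantor = product_topology (\<lambda>_. discrete_topology (UNIV :: bool set)) (UNIV :: nat set)"

definition Fin :: "(nat \<Rightarrow> bool) set" where
  "Fin = {x. finite {n. x n}}"

definition semifilter :: "(nat \<Rightarrow> bool) set \<Rightarrow> bool" where
  "semifilter S \<longleftrightarrow>
     (\<lambda>_. False) \<notin> S \<and>
     (\<lambda>_. True) \<in> S \<and>
     (\<forall>x y. x \<in> S \<and> finite {n. x n \<noteq> y n} \<longrightarrow> y \<in> S) \<and>
     (\<forall>x y. x \<in> S \<and> (\<forall>n. x n \<longrightarrow> y n) \<longrightarrow> y \<in> S)"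

end

theory Submission
  imports Defs
begin

definition ilv :: "(nat \<Rightarrow> bool) \<times> (nat \<Rightarrow> bool) \<Rightarrow> nat \<Rightarrow> bool" where
  "ilv p = (\<lambda>k. if even k then fst p (k div 2) else snd p (k div 2))"

definition dlv :: "(nat \<Rightarrow> bool) \<Rightarrow> (nat \<Rightarrow> bool) \<times> (nat \<Rightarrow> bool)" where
  "dlv z = ((\<lambda>n. z (2*n)), (\<lambda>n. z (2*n+1)))"

lemma topspace_Cantor [simp]: "topspace Cantor = UNIV"
  by (simp add: Cantor_def)

lemma ilv_even [simp]: "ilv p (2*n) = fst p n" by (simp add: ilv_def)
lemma ilv_odd [simp]: "ilv p (2*n+1) = snd p n" by (simp add: ilv_def)
lemma ilv_odd' [simp]: "ilv p (Suc (2*n)) = snd p n" by (simp add: ilv_def)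

lemma proj_cont: "continuous_map Cantor (discrete_topology UNIV) (\<lambda>x. x k)"
  unfolding Cantor_def by (rule continuous_map_product_projection) simp

lemma ilv_cont: "continuous_map (prod_topology Cantor Cantor) Cantor ilv"
proof -
  have "continuous_map (prod_topology Cantor Cantor) (discrete_topology UNIV) (\<lambda>p. ilv p k)" for k
  proof (cases "even k")
    case True
    then have "(\<lambda>p. ilv p k) = (\<lambda>x. x (k div 2)) \<circ> fst" by (auto simp: ilv_def)
    then show ?thesis using continuous_map_compose[OF continuous_map_fst proj_cont] by simp
  next
    case False
    then have "(\<lambda>p. ilv p k) = (\<lambda>x. x (k div 2)) \<circ> snd" by (auto simp: ilv_def)
    then show ?thesis using continuous_map_compose[OF continuous_map_snd proj_cont] by simp
  qed
  then show ?thesis by (subst (2) Cantor_def) (simp add: continuous_map_componentwise_UNIV)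
qed

lemma dlv_cont: "continuous_map Cantor (prod_topology Cantor Cantor) dlv"
proof -
  have a: "continuous_map Cantor Cantor (\<lambda>z n. z (2*n))"
    using proj_cont by (subst (2) Cantor_def) (simp add: continuous_map_componentwise_UNIV)
  have b: "continuous_map Cantor Cantor (\<lambda>z n. z (2*n+1))"
    using proj_cont by (subst (2) Cantor_def) (simp add: continuous_map_componentwise_UNIV)
  show ?thesis unfolding dlv_def using a b by (simp add: continuous_map_paired)
qed

lemma ilv_homeo: "homeomorphic_map (prod_topology Cantor Cantor) Cantor ilv"
proof -
  have "homeomorphic_maps (prod_topology Cantor Cantor) Cantor ilv dlv"
    unfolding homeomorphic_maps_def
  proof (intro conjI ilv_cont dlv_cont ballI)
    fix p :: "(nat \<Rightarrow> bool) \<times> (nat \<Rightarrow> bool)"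
    show "dlv (ilv p) = p" by (simp add: dlv_def)
  next
    fix z :: "nat \<Rightarrow> bool"
    show "ilv (dlv z) = z"
    proof
      fix k show "ilv (dlv z) k = z k"
        by (cases "even k") (auto simp: ilv_def dlv_def elim!: evenE oddE)
    qed
  qed
  then show ?thesis using homeomorphic_map_maps by blast
qed

lemma fin_sub:
  fixes z w :: "nat \<Rightarrow> bool" and d :: nat
  assumes "finite {k. z k \<noteq> w k}"
  shows "finite {n. z (2*n+d) \<noteq> w (2*n+d)}"
proof -
  have "{n. z (2*n+d) \<noteq> w (2*n+d)} \<subseteq> (\<lambda>k. (k - d) div 2) ` {k. z k \<noteq> w k}"
  proof
    fix n assume "n \<in> {n. z (2*n+d) \<noteq> w (2*n+d)}"
    then show "n \<in> (\<lambda>k. (k - d) div 2) ` {k. z k \<noteq> w k}"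
      by (auto intro!: image_eqI[where x="2*n+d"])
  qed
  then show ?thesis using assms finite_surj by blast
qed

definition TT :: "(nat \<Rightarrow> bool) set \<Rightarrow> (nat \<Rightarrow> bool) set" where
  "TT S = {z. infinite {n. z (2*n)} \<or> (\<lambda>n. z (2*n+1)) \<in> S}"

lemma sf_mod: "semifilter S \<Longrightarrow> x \<in> S \<Longrightarrow> finite {n. x n \<noteq> y n} \<Longrightarrow> y \<in> S"
  unfolding semifilter_def by blast
lemma sf_up: "semifilter S \<Longrightarrow> x \<in> S \<Longrightarrow> (\<forall>n. x n \<longrightarrow> y n) \<Longrightarrow> y \<in> S"
  unfolding semifilter_def by blast

lemma TT_semi:
  assumes "semifilter S" shows "semifilter (TT S)"
  unfolding semifilter_def
proof (intro conjI allI impI)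
  have "(\<lambda>_. False) \<notin> S" using assms unfolding semifilter_def by (elim conjE)
  then show "(\<lambda>_. False) \<notin> TT S" unfolding TT_def by simp
  have "(\<lambda>_. True) \<in> S" using assms unfolding semifilter_def by (elim conjE)
  then show "(\<lambda>_. True) \<in> TT S" unfolding TT_def by simp
next
  fix x y assume h: "x \<in> TT S \<and> finite {n. x n \<noteq> y n}"
  have f0: "finite {n. x (2*n) \<noteq> y (2*n)}" using h fin_sub[of x y 0] by simp
  have f1: "finite {n. x (2*n+1) \<noteq> y (2*n+1)}" using h fin_sub[of x y 1] by simp
  show "y \<in> TT S"
  proof (cases "infinite {n. x (2*n)}")
    case True
    have sub: "{n. x (2*n)} \<subseteq> {n. y (2*n)} \<union> {n. x (2*n) \<noteq> y (2*n)}" by auto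
    have "infinite {n. y (2*n)}"
    proof
      assume "finite {n. y (2*n)}"
      then have "finite ({n. y (2*n)} \<union> {n. x (2*n) \<noteq> y (2*n)})" using f0 by simp
      then have "finite {n. x (2*n)}" by (rule finite_subset[OF sub])
      then show False using True by simp
    qed
    then show ?thesis unfolding TT_def by simp
  next
    case False
    then have "(\<lambda>n. x (2*n+1)) \<in> S" using h by (simp add: TT_def)
    moreover have "finite {n. x (2*n+1) \<noteq> y (2*n+1)}" using f1 .
    ultimately have "(\<lambda>n. y (2*n+1)) \<in> S" using assms
      sf_mod[of S "\<lambda>n. x (2*n+1)" "\<lambda>n. y (2*n+1)"] by simp
    then show ?thesis by (simp add: TT_def)
  qed
next
  fix x y assume h: "x \<in> TT S \<and> (\<forall>n. x n \<longrightarrow> y n)"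
  show "y \<in> TT S"
  proof (cases "infinite {n. x (2*n)}")
    case True
    have "{n. x (2*n)} \<subseteq> {n. y (2*n)}" using h by auto
    then have "infinite {n. y (2*n)}" using True finite_subset by blast
    then show ?thesis by (simp add: TT_def)
  next
    case False
    then have "(\<lambda>n. x (2*n+1)) \<in> S" using h by (simp add: TT_def)
    moreover have "\<forall>n. x (2*n+1) \<longrightarrow> y (2*n+1)" using h by blast
    ultimately have "(\<lambda>n. y (2*n+1)) \<in> S" using assms
      sf_up[of S "\<lambda>n. x (2*n+1)" "\<lambda>n. y (2*n+1)"] by simp
    then show ?thesis by (simp add: TT_def)
  qed
qed

theorem lemma8p3:
  assumes "semifilter S"
  shows "\<exists>T. semifilter T \<and>
    subtopology (prod_topology Cantor Cantor) (UNIV - Fin \<times> (UNIV - S))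
      homeomorphic_space subtopology Cantor T"
proof (intro exI conjI)
  show "semifilter (TT S)" using TT_semi[OF assms] .
  have e: "(\<lambda>n. fst p n) = fst p" "(\<lambda>n. snd p n) = snd p" for p :: "(nat \<Rightarrow> bool) \<times> (nat \<Rightarrow> bool)"
    by auto
  have "homeomorphic_map (subtopology (prod_topology Cantor Cantor) (UNIV - Fin \<times> (UNIV - S)))
          (subtopology Cantor (TT S)) ilv"
  proof (rule homeomorphic_map_subtopologies_alt[OF ilv_homeo])
    fix p :: "(nat \<Rightarrow> bool) \<times> (nat \<Rightarrow> bool)"
    show "ilv p \<in> TT S \<longleftrightarrow> p \<in> UNIV - Fin \<times> (UNIV - S)"
      by (cases p) (auto simp: TT_def Fin_def)
  qed
  then show "subtopology (prod_topology Cantor Cantor) (UNIV - Fin \<times> (UNIV - S))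
      homeomorphic_space subtopology Cantor (TT S)"
    using homeomorphic_space by blast
qed

end
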